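(* Let $\mathcal{G}\subset\mathcal{S}$ with harmonic analogue $\mathcal{G}_H^0$, and let $\mathcal{O}\subset\mathcal{A}$ be such that $\varphi*F\in\mathcal{G}$ for all $F\in\mathcal{G}$ and $\varphi\in\mathcal{O}$. Then $\varphi\,\tilde{*}\,f\in\mathcal{G}_H^0$ for all $\varphi\in\mathcal{O}$ and $f\in\mathcal{G}_H^0$.
   Context: $\mathbb{D}$ is the open unit disk. $\mathcal{A}$ is the class of analytic $f$ in $\mathbb{D}$ with $f(0)=0$, $f'(0)=1$, and $\mathcal{S}\subset\mathcal{A}$ the univalent ones. For $\mathcal{G}\subset\mathcal{S}$, its harmonic analogue $\mathcal{G}_H^0$ is the class of harmonic functions $f=h+\bar g$ ($h,g$ analytic in $\mathbb{D}$) such that $h+\epsilon g\in\mathcal{G}$ for every $|\epsilon|=1$. For analytic $f(z)=\sum a_nz^n$, $F(z)=\sum A_nz^n$, $(f*F)(z)=\sum a_nA_nz^n$. For harmonic $f=h+\bar g$ and analytic $\varphi$, $f\,\tilde{*}\,\varphi=\varphi\,\tilde{*}\,f=h*\varphi+\overline{g*\varphi}$. *)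

theory Defs
  imports "HOL-Analysis.Analysis"
begin

text \<open>Functions on the open unit disk are represented by total functions
  complex \<Rightarrow> complex; only their behaviour on the disk is constrained.\<close>

definition classA :: "(complex \<Rightarrow> complex) set" where
  "classA = {f. f holomorphic_on ball 0 1 \<and> f 0 = 0 \<and> deriv f 0 = 1}"

definition classS :: "(complex \<Rightarrow> complex) set" where
  "classS = {f \<in> classA. inj_on f (ball 0 1)}"

definition taylor_coeff :: "(complex \<Rightarrow> complex) \<Rightarrow> nat \<Rightarrow> complex" where
  "taylor_coeff f n = (deriv ^^ n) f 0 / of_nat (fact n)"

definition hadamard :: "(complex \<Rightarrow> complex) \<Rightarrow> (complex \<Rightarrow> complex) \<Rightarrow> complex \<Rightarrow> complex" where
  "hadamard f F z = (if z \<in> ball 0 1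
      then (\<Sum>n. taylor_coeff f n * taylor_coeff F n * z ^ n) else 0)"

text \<open>A harmonic function f = h + conj g is represented by the pair (h, g).
  Harmonic analogue of a class G.\<close>
definition harmonic_analogue ::
  "(complex \<Rightarrow> complex) set \<Rightarrow> ((complex \<Rightarrow> complex) \<times> (complex \<Rightarrow> complex)) set" where
  "harmonic_analogue G = {(h, g). h holomorphic_on ball 0 1 \<and> g holomorphic_on ball 0 1 \<and>
      (\<forall>\<epsilon>. cmod \<epsilon> = 1 \<longrightarrow> (\<lambda>z. h z + \<epsilon> * g z) \<in> G)}"

definition harm_fun :: "(complex \<Rightarrow> complex) \<times> (complex \<Rightarrow> complex) \<Rightarrow> complex \<Rightarrow> complex" where
  "harm_fun f z = fst f z + cnj (snd f z)"

definition harm_conv ::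
  "(complex \<Rightarrow> complex) \<Rightarrow> (complex \<Rightarrow> complex) \<times> (complex \<Rightarrow> complex)
   \<Rightarrow> (complex \<Rightarrow> complex) \<times> (complex \<Rightarrow> complex)" where
  "harm_conv \<phi> f = (hadamard (fst f) \<phi>, hadamard (snd f) \<phi>)"

end

theory Submission
  imports Defs "HOL-Complex_Analysis.Complex_Analysis"
begin

lemma coeff_small:
  assumes h: "h holomorphic_on ball 0 1" and t: "0 \<le> t" "t < 1"
  shows "eventually (\<lambda>n. norm (taylor_coeff h n) * t ^ n < 1) sequentially"
proof -
  have "(\<lambda>n. (deriv ^^ n) h 0 / fact n * (complex_of_real t - 0)^n) sums h (complex_of_real t)"
    by (rule holomorphic_power_series[OF h]) (use t in auto)
  hence "(\<lambda>n. taylor_coeff h n * complex_of_real t ^ n) \<longlonglongrightarrow> 0"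
    unfolding taylor_coeff_def by (simp add: sums_iff summable_LIMSEQ_zero)
  hence "(\<lambda>n. norm (taylor_coeff h n * complex_of_real t ^ n)) \<longlonglongrightarrow> 0"
    by (simp add: tendsto_norm_zero)
  from order_tendstoD(2)[OF this, of 1] show ?thesis
    using t by (simp add: norm_mult norm_power)
qed

lemma had_summable:
  assumes h: "h holomorphic_on ball 0 1" and p: "p holomorphic_on ball 0 1"
    and z: "(z::complex) \<in> ball 0 1"
  shows "summable (\<lambda>n. taylor_coeff h n * taylor_coeff p n * z ^ n)"
proof -
  define r where "r = norm z"
  have r: "0 \<le> r" "r < 1" using z by (auto simp: r_def)
  define t where "t = sqrt ((1 + r) / 2)"
  have t: "0 \<le> t" "t < 1" using r by (auto simp: t_def real_sqrt_lt_1_iff)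
  have tt: "t^2 = (1 + r)/2" using r by (simp add: t_def)
  have tpos: "t > 0" using r by (simp add: t_def)
  have rt: "r < t^2" "0 < t^2" using r tt by auto
  have q: "r / t^2 < 1" "0 \<le> r / t^2" using rt r by (auto simp: divide_less_eq)
  have ev: "eventually (\<lambda>n. norm (taylor_coeff h n * taylor_coeff p n * z ^ n) \<le> (r / t^2) ^ n) sequentially"
    using coeff_small[OF h t] coeff_small[OF p t]
  proof eventually_elim
    case (elim n)
    have "norm (taylor_coeff h n * taylor_coeff p n * z ^ n)
        = (norm (taylor_coeff h n) * t ^ n) * (norm (taylor_coeff p n) * t ^ n) * (r / t^2) ^ n"
      using tpos by (simp add: norm_mult norm_power r_def power_divide field_simps power_mult_distrib
          mult_2_right power_add flip: power_mult)
    also have "\<dots> \<le> 1 * 1 * (r / t^2) ^ n"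
      using elim q t by (intro mult_right_mono mult_mono) auto
    finally show ?case by simp
  qed
  show ?thesis
    by (rule summable_comparison_test_ev[OF ev]) (use q in \<open>simp add: summable_geometric\<close>)
qed

lemma had_lin:
  assumes h: "h holomorphic_on ball 0 1" and g: "g holomorphic_on ball 0 1"
    and p: "p holomorphic_on ball 0 1"
  shows "hadamard p (\<lambda>z. h z + e * g z) = (\<lambda>z. hadamard h p z + e * hadamard g p z)"
proof
  fix z :: complex
  show "hadamard p (\<lambda>z. h z + e * g z) z = hadamard h p z + e * hadamard g p z"
  proof (cases "z \<in> ball 0 1")
    case False thus ?thesis by (simp add: hadamard_def)
  next
    case True
    have eg: "(\<lambda>z. e * g z) holomorphic_on ball 0 1" using g by (intro holomorphic_intros)
    have c: "taylor_coeff (\<lambda>z. h z + e * g z) n = taylor_coeff h n + e * taylor_coeff g n" for n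
      unfolding taylor_coeff_def
      using higher_deriv_add[OF h eg, of 0 n] higher_deriv_cmult[OF g, of 0 n e]
      by (simp add: add_divide_distrib)
    note s1 = had_summable[OF h p True]
    note s2 = had_summable[OF g p True]
    have "(\<Sum>n. taylor_coeff p n * taylor_coeff (\<lambda>z. h z + e * g z) n * z ^ n)
        = (\<Sum>n. taylor_coeff h n * taylor_coeff p n * z ^ n + e * (taylor_coeff g n * taylor_coeff p n * z ^ n))"
      by (simp add: c algebra_simps)
    also have "\<dots> = (\<Sum>n. taylor_coeff h n * taylor_coeff p n * z ^ n) + e * (\<Sum>n. taylor_coeff g n * taylor_coeff p n * z ^ n)"
      using suminf_add[OF s1 summable_mult[OF s2, of e]] suminf_mult[OF s2, of e] by simp
    finally show ?thesis using True by (simp add: hadamard_def)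
  qed
qed

theorem theorem2p11:
  fixes G Ocl :: "(complex \<Rightarrow> complex) set"
  assumes "G \<subseteq> classS"
    and "Ocl \<subseteq> classA"
    and "\<And>\<phi> F. \<phi> \<in> Ocl \<Longrightarrow> F \<in> G \<Longrightarrow> hadamard \<phi> F \<in> G"
  shows "\<forall>\<phi>\<in>Ocl. \<forall>f\<in>harmonic_analogue G. harm_conv \<phi> f \<in> harmonic_analogue G"
proof (intro ballI)
  fix p f assume pO: "p \<in> Ocl" and f: "f \<in> harmonic_analogue G"
  obtain h g where fe: "f = (h, g)" by (cases f)
  have h: "h holomorphic_on ball 0 1" and g: "g holomorphic_on ball 0 1"
    and G: "\<And>e. cmod e = 1 \<Longrightarrow> (\<lambda>z. h z + e * g z) \<in> G"
    using f by (auto simp: harmonic_analogue_def fe)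
  have p: "p holomorphic_on ball 0 1" using pO assms(2) by (auto simp: classA_def)
  have inG: "(\<lambda>z. hadamard h p z + e * hadamard g p z) \<in> G" if "cmod e = 1" for e
    using assms(3)[OF pO G[OF that]] had_lin[OF h g p, of e] by simp
  have hol: "(\<lambda>z. hadamard h p z + e * hadamard g p z) holomorphic_on ball 0 1" if "cmod e = 1" for e
    using inG[OF that] assms(1) by (auto simp: classS_def classA_def)
  have H1: "(\<lambda>z. hadamard h p z + 1 * hadamard g p z) holomorphic_on ball 0 1" by (rule hol) simp
  have H2: "(\<lambda>z. hadamard h p z + (-1) * hadamard g p z) holomorphic_on ball 0 1" by (rule hol) simp
  have "(\<lambda>z. ((hadamard h p z + 1 * hadamard g p z) + (hadamard h p z + (-1) * hadamard g p z)) / 2)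
        holomorphic_on ball 0 1" using holomorphic_on_divide[OF holomorphic_on_add[OF H1 H2] holomorphic_on_const, of 2] by simp
  moreover have "(\<lambda>z. ((hadamard h p z + 1 * hadamard g p z) + (hadamard h p z + (-1) * hadamard g p z)) / 2) = hadamard h p"
    by (rule ext) simp
  ultimately have Hh: "hadamard h p holomorphic_on ball 0 1" by metis
  have "(\<lambda>z. ((hadamard h p z + 1 * hadamard g p z) - (hadamard h p z + (-1) * hadamard g p z)) / 2)
        holomorphic_on ball 0 1" using holomorphic_on_divide[OF holomorphic_on_diff[OF H1 H2] holomorphic_on_const, of 2] by simp
  moreover have "(\<lambda>z. ((hadamard h p z + 1 * hadamard g p z) - (hadamard h p z + (-1) * hadamard g p z)) / 2) = hadamard g p"
    by (rule ext) simp
  ultimately have Hg: "hadamard g p holomorphic_on ball 0 1" by metis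
  show "harm_conv p f \<in> harmonic_analogue G"
    using Hh Hg inG by (simp add: harm_conv_def fe harmonic_analogue_def)
qed

end
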